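(* For $n>2$ and a fixed pair $i<j$ in $\{1,\dots,n\}$, the map $w^{\mathcal{P}}_{\{i,j\}}\colon G_{n,\mathcal{P}}^2\to F_n^2$ defined below is well defined, i.e. its value on a word does not change when the relations of $G_{n,\mathcal{P}}^2$ are applied to the word.
   Context: $G_{n,\mathcal{P}}^2$ has generators $a_{kl}^{\epsilon}$ ($\{k,l\}\subset\{1,\dots,n\}$, $\epsilon\in\{0,1\}$, with $a^\epsilon_{kl}=a^\epsilon_{lk}$) and relations $(a_{kl}^\epsilon)^2=1$; $a_{kl}^{\epsilon}a_{st}^{\epsilon'}=a_{st}^{\epsilon'}a_{kl}^{\epsilon}$ for $\{k,l\}\cap\{s,t\}=\emptyset$; $a_{kl}^{\epsilon_{kl}}a_{ks}^{\epsilon_{ks}}a_{ls}^{\epsilon_{ls}}=a_{ls}^{\epsilon_{ls}}a_{ks}^{\epsilon_{ks}}a_{kl}^{\epsilon_{kl}}$ for distinct $k,l,s$ with $\epsilon_{kl}+\epsilon_{ks}+\epsilon_{ls}\equiv0\pmod2$. Let $F_n^2$ be the group generated by all maps $\sigma\colon\{1,\dots,n\}\setminus\{i,j\}\to\mathbb{Z}_2$ subject only to the relations $\sigma^2=1$ (a free product of copies of $\mathbb{Z}_2$). For a word $\beta$ in the generators of $G_{n,\mathcal{P}}^2$, each occurrence $c=a_{ij}^{\epsilon}$ of a letter with index pair $\{i,j\}$, and each $k\in\{1,\dots,n\}\setminus\{i,j\}$, put $i^{\mathcal{P}}_c(k)=N^0_{ik}+N^0_{jk}\bmod 2$ if $\epsilon=0$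 and $i^{\mathcal{P}}_c(k)=N^0_{ik}+N^1_{jk}\bmod 2$ if $\epsilon=1$, where $N^{\delta}_{st}$ is the number of occurrences of $a^{\delta}_{st}$ in $\beta$ before $c$. If $c_1,\dots,c_m$ are the occurrences of letters $a_{ij}^{\epsilon}$ (any $\epsilon$) in $\beta$ in order, set $w^{\mathcal{P}}_{\{i,j\}}(\beta)=i^{\mathcal{P}}_{c_1}\cdots i^{\mathcal{P}}_{c_m}\in F_n^2$. *)

theory Defs
  imports Main
begin

text \<open>A letter a_{kl}^eps of G^2_{n,P} is encoded as the pair ({k,l}, eps), eps in {0,1};
  this makes a_{kl}^eps = a_{lk}^eps automatic.\<close>
type_synonym letter = "nat set \<times> nat"

definition valid_letter :: "nat \<Rightarrow> letter \<Rightarrow> bool" where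
  "valid_letter n c \<longleftrightarrow> fst c \<subseteq> {1..n} \<and> card (fst c) = 2 \<and> snd c \<le> 1"

inductive G_rel :: "nat \<Rightarrow> letter list \<Rightarrow> letter list \<Rightarrow> bool" for n where
  sq: "valid_letter n a \<Longrightarrow> G_rel n [a, a] []"
| comm: "\<lbrakk>k \<in> {1..n}; l \<in> {1..n}; s \<in> {1..n}; t \<in> {1..n}; k \<noteq> l; s \<noteq> t;
          {k,l} \<inter> {s,t} = {}; e \<le> 1; e' \<le> 1\<rbrakk>
        \<Longrightarrow> G_rel n [({k,l},e), ({s,t},e')] [({s,t},e'), ({k,l},e)]"
| tetra: "\<lbrakk>k \<in> {1..n}; l \<in> {1..n}; s \<in> {1..n}; k \<noteq> l; k \<noteq> s; l \<noteq> s;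
          e1 \<le> 1; e2 \<le> 1; e3 \<le> 1; even (e1 + e2 + e3)\<rbrakk>
        \<Longrightarrow> G_rel n [({k,l},e1), ({k,s},e2), ({l,s},e3)] [({l,s},e3), ({k,s},e2), ({k,l},e1)]"

definition G_step :: "nat \<Rightarrow> letter list \<Rightarrow> letter list \<Rightarrow> bool" where
  "G_step n x y \<longleftrightarrow> (\<exists>u v a b. G_rel n a b \<and> x = u @ a @ v \<and> y = u @ b @ v
      \<and> (\<forall>c \<in> set u \<union> set v. valid_letter n c))"

definition G_equiv :: "nat \<Rightarrow> letter list \<Rightarrow> letter list \<Rightarrow> bool" where
  "G_equiv n = equivclp (G_step n)"

text \<open>F_n^2: words in generators sigma (maps {1..n}-{i,j} \<rightarrow> Z_2, encoded as
  functions nat \<Rightarrow> bool that are False outside {1..n}-{i,j}), modulo sigma^2 = 1.\<close>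
inductive F_step :: "'g list \<Rightarrow> 'g list \<Rightarrow> bool" where
  "F_step (u @ [x, x] @ v) (u @ v)"

definition F_equiv :: "'g list \<Rightarrow> 'g list \<Rightarrow> bool" where
  "F_equiv = equivclp F_step"

definition Ncount :: "letter list \<Rightarrow> nat \<Rightarrow> nat \<Rightarrow> nat \<Rightarrow> nat" where
  "Ncount pre s t d = length (filter (\<lambda>c. c = ({s,t}, d)) pre)"

definition iP :: "nat \<Rightarrow> nat \<Rightarrow> nat \<Rightarrow> letter list \<Rightarrow> nat \<Rightarrow> nat \<Rightarrow> bool" where
  "iP n i j pre e = (\<lambda>k. if k \<in> {1..n} - {i,j} then
      (if e = 0 then odd (Ncount pre i k 0 + Ncount pre j k 0)
       else odd (Ncount pre i k 0 + Ncount pre j k 1))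
     else False)"

definition wP :: "nat \<Rightarrow> nat \<Rightarrow> nat \<Rightarrow> letter list \<Rightarrow> (nat \<Rightarrow> bool) list" where
  "wP n i j \<beta> = concat (map (\<lambda>p. if fst (\<beta> ! p) = {i,j}
        then [iP n i j (take p \<beta>) (snd (\<beta> ! p))] else []) [0..<length \<beta>])"

end

theory Submission
  imports Defs
begin

fun wr :: "nat \<Rightarrow> nat \<Rightarrow> nat \<Rightarrow> letter list \<Rightarrow> letter list \<Rightarrow> (nat \<Rightarrow> bool) list" where
  "wr n i j pre [] = []"
| "wr n i j pre (c # cs) = (if fst c = {i,j} then [iP n i j pre (snd c)] else []) @ wr n i j (pre @ [c]) cs"

lemma wr_append: "wr n i j pre (xs @ ys) = wr n i j pre xs @ wr n i j (pre @ xs) ys"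
  by (induction xs arbitrary: pre) auto

lemma Ncount_snoc: "Ncount (pre @ [c]) s t d = Ncount pre s t d + (if c = ({s,t},d) then 1 else 0)"
  unfolding Ncount_def by simp

lemma Ncount_append: "Ncount (pre @ xs) s t d = Ncount pre s t d + Ncount xs s t d"
  unfolding Ncount_def by simp

lemma iP_par:
  assumes "\<forall>s t d. even (Ncount pre s t d + Ncount pre' s t d)"
  shows "iP n i j pre e = iP n i j pre' e"
proof -
  have "\<And>s t d. odd (Ncount pre s t d) = odd (Ncount pre' s t d)" using assms by auto
  then show ?thesis unfolding iP_def by (auto intro!: ext)
qed

lemma wr_par:
  assumes "\<forall>s t d. even (Ncount pre s t d + Ncount pre' s t d)"
  shows "wr n i j pre ys = wr n i j pre' ys"
  using assms
proof (induction ys arbitrary: pre pre')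
  case Nil then show ?case by simp
next
  case (Cons c cs)
  have "\<forall>s t d. even (Ncount (pre@[c]) s t d + Ncount (pre'@[c]) s t d)"
    using Cons.prems by (simp add: Ncount_snoc)
  then show ?case using Cons iP_par[OF Cons.prems] by simp
qed

lemma wP_wr: "wP n i j \<beta> = wr n i j [] \<beta>"
proof (induction \<beta> rule: rev_induct)
  case Nil then show ?case by (simp add: wP_def)
next
  case (snoc c xs)
  have "wP n i j (xs @ [c]) = wP n i j xs @ (if fst c = {i,j} then [iP n i j xs (snd c)] else [])"
    unfolding wP_def by (auto simp: nth_append intro!: arg_cong[where f=concat] map_cong)
  then show ?case using snoc by (simp add: wr_append)
qed

lemma iP_alt: "e \<le> 1 \<Longrightarrow> iP n i j pre e m = (m \<in> {1..n} - {i,j} \<and> odd (Ncount pre i m 0 + Ncount pre j m e))"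
proof -
  assume "e \<le> 1"
  then have "e = 0 \<or> e = 1" by auto
  then show ?thesis unfolding iP_def by (elim disjE) auto
qed

lemma pair_ne: "m \<notin> {a,b} \<Longrightarrow> {a,b} \<noteq> {c,m}" by (auto simp: doubleton_eq_iff)
lemma pair_ne2: "a \<noteq> c \<Longrightarrow> b \<noteq> c \<Longrightarrow> {a,b} \<noteq> {c,b}" by (auto simp: doubleton_eq_iff)
lemma Ncount2: "Ncount [a,b] s t d = (if a = ({s,t},d) then 1 else 0) + (if b = ({s,t},d) then 1 else 0)"
  unfolding Ncount_def by simp
lemma Ncount1: "Ncount [a] s t d = (if a = ({s,t},d) then 1 else 0)"
  unfolding Ncount_def by simp


lemma two_cases: "(e::nat) \<le> 1 \<Longrightarrow> e = 0 \<or> e = 1" by auto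

lemma caseAB:
  assumes "i \<noteq> j" "i \<noteq> s" "j \<noteq> s" "e \<le> 1" "x \<le> 1" "y \<le> 1" "even (e + x + y)"
  shows "iP n i j u e = iP n i j (u @ [({j,s},x), ({i,s},y)]) e"
    and "iP n i j u e = iP n i j (u @ [({i,s},x), ({j,s},y)]) e"
proof -
  have a: "{j,s} \<noteq> {i,s}" "{i,s} \<noteq> {j,s}" using assms pair_ne2 by metis+
  have b: "\<And>m. m \<noteq> s \<Longrightarrow> m \<notin> {i,j} \<Longrightarrow> {i,s} \<noteq> {i,m} \<and> {i,s} \<noteq> {j,m} \<and> {j,s} \<noteq> {i,m} \<and> {j,s} \<noteq> {j,m}"
    by (auto simp: doubleton_eq_iff)
  show "iP n i j u e = iP n i j (u @ [({j,s},x), ({i,s},y)]) e"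
  proof
    fix m
    show "iP n i j u e m = iP n i j (u @ [({j,s},x), ({i,s},y)]) e m"
    proof (cases "m = s")
      case True
      have "even (Ncount [({j,s},x), ({i,s},y)] i s 0 + Ncount [({j,s},x), ({i,s},y)] j s e)"
        unfolding Ncount2 using a assms two_cases[OF assms(4)] two_cases[OF assms(5)] two_cases[OF assms(6)]
        by (elim disjE; simp)
      then show ?thesis unfolding iP_alt[OF assms(4)] Ncount_append True by auto
    next
      case False
      show ?thesis
      proof (cases "m \<in> {i,j}")
        case True
        then show ?thesis unfolding iP_alt[OF assms(4)] by auto
      next
        case F2: False
        have "Ncount [({j,s},x), ({i,s},y)] i m 0 = 0" "Ncount [({j,s},x), ({i,s},y)] j m e = 0"
          unfolding Ncount2 using b[OF False F2] by auto
        then show ?thesis unfolding iP_alt[OF assms(4)] Ncount_append by simp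
      qed
    qed
  qed
  show "iP n i j u e = iP n i j (u @ [({i,s},x), ({j,s},y)]) e"
  proof
    fix m
    show "iP n i j u e m = iP n i j (u @ [({i,s},x), ({j,s},y)]) e m"
    proof (cases "m = s")
      case True
      have "even (Ncount [({i,s},x), ({j,s},y)] i s 0 + Ncount [({i,s},x), ({j,s},y)] j s e)"
        unfolding Ncount2 using a assms two_cases[OF assms(4)] two_cases[OF assms(5)] two_cases[OF assms(6)]
        by (elim disjE; simp)
      then show ?thesis unfolding iP_alt[OF assms(4)] Ncount_append True by auto
    next
      case False
      show ?thesis
      proof (cases "m \<in> {i,j}")
        case True
        then show ?thesis unfolding iP_alt[OF assms(4)] by auto
      next
        case F2: False
        have "Ncount [({i,s},x), ({j,s},y)] i m 0 = 0" "Ncount [({i,s},x), ({j,s},y)] j m e = 0"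
          unfolding Ncount2 using b[OF False F2] by auto
        then show ?thesis unfolding iP_alt[OF assms(4)] Ncount_append by simp
      qed
    qed
  qed
qed

lemma caseC:
  assumes "i \<noteq> j" "i \<noteq> s" "j \<noteq> s" "e \<le> 1" "x \<le> 1" "y \<le> 1" "even (e + x + y)"
  shows "iP n i j (u @ [({i,s},x)]) e = iP n i j (u @ [({j,s},y)]) e"
proof -
  have a: "{j,s} \<noteq> {i,s}" "{i,s} \<noteq> {j,s}" using assms pair_ne2 by metis+
  have b: "\<And>m. m \<noteq> s \<Longrightarrow> m \<notin> {i,j} \<Longrightarrow> {i,s} \<noteq> {i,m} \<and> {i,s} \<noteq> {j,m} \<and> {j,s} \<noteq> {i,m} \<and> {j,s} \<noteq> {j,m}"
    by (auto simp: doubleton_eq_iff)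
  show ?thesis
  proof
    fix m
    show "iP n i j (u @ [({i,s},x)]) e m = iP n i j (u @ [({j,s},y)]) e m"
    proof (cases "m = s")
      case True
      have "odd (Ncount [({i,s},x)] i s 0 + Ncount [({i,s},x)] j s e) = odd (Ncount [({j,s},y)] i s 0 + Ncount [({j,s},y)] j s e)"
        unfolding Ncount1 using a assms two_cases[OF assms(4)] two_cases[OF assms(5)] two_cases[OF assms(6)]
        by (elim disjE; simp)
      then show ?thesis unfolding iP_alt[OF assms(4)] Ncount_append True by auto
    next
      case False
      show ?thesis
      proof (cases "m \<in> {i,j}")
        case True
        then show ?thesis unfolding iP_alt[OF assms(4)] by auto
      next
        case F2: False
        have "Ncount [({i,s},x)] i m 0 = 0" "Ncount [({i,s},x)] j m e = 0"
          "Ncount [({j,s},y)] i m 0 = 0" "Ncount [({j,s},y)] j m e = 0"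
          unfolding Ncount1 using b[OF False F2] by auto
        then show ?thesis unfolding iP_alt[OF assms(4)] Ncount_append by simp
      qed
    qed
  qed
qed


lemma tetra_wr:
  assumes "k \<noteq> l" "k \<noteq> s" "l \<noteq> s" "e1 \<le> 1" "e2 \<le> 1" "e3 \<le> 1" "even (e1 + e2 + e3)" "i \<noteq> j"
  shows "wr n i j u [({k,l},e1), ({k,s},e2), ({l,s},e3)] = wr n i j u [({l,s},e3), ({k,s},e2), ({k,l},e1)]"
proof -
  have d1: "{k,l} \<noteq> {k,s}" "{k,l} \<noteq> {l,s}" "{k,s} \<noteq> {l,s}" using assms by (auto simp: doubleton_eq_iff)
  have ev1: "even (e1 + e3 + e2)" "even (e2 + e1 + e3)" "even (e2 + e3 + e1)" "even (e3 + e1 + e2)"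
    using assms(7) by (simp_all add: ac_simps)
  consider "{k,l} = {i,j}" | "{k,s} = {i,j}" | "{l,s} = {i,j}" | "{k,l} \<noteq> {i,j}" "{k,s} \<noteq> {i,j}" "{l,s} \<noteq> {i,j}" by blast
  then show ?thesis
  proof cases
    case 1
    then have "(k = i \<and> l = j) \<or> (k = j \<and> l = i)" by (auto simp: doubleton_eq_iff)
    then have "iP n i j u e1 = iP n i j (u @ [({l,s},e3), ({k,s},e2)]) e1"
    proof
      assume h: "k = i \<and> l = j"
      show ?thesis using h caseAB(1)[of i j s e1 e3 e2 n u] assms ev1 by simp
    next
      assume h: "k = j \<and> l = i"
      show ?thesis using h caseAB(2)[of i j s e1 e3 e2 n u] assms ev1 by simp
    qed
    then show ?thesis using 1 d1 by simp
  next
    case 2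
    then have "(k = i \<and> s = j) \<or> (k = j \<and> s = i)" by (auto simp: doubleton_eq_iff)
    then have "iP n i j (u @ [({k,l},e1)]) e2 = iP n i j (u @ [({l,s},e3)]) e2"
    proof
      assume h: "k = i \<and> s = j"
      show ?thesis using h caseC[of i j l e2 e1 e3 n u] assms ev1 by (simp add: insert_commute)
    next
      assume h: "k = j \<and> s = i"
      show ?thesis using h caseC[of i j l e2 e3 e1 n u] assms ev1 by (simp add: insert_commute)
    qed
    then show ?thesis using 2 d1 by simp
  next
    case 3
    then have "(l = i \<and> s = j) \<or> (l = j \<and> s = i)" by (auto simp: doubleton_eq_iff)
    then have "iP n i j (u @ [({k,l},e1), ({k,s},e2)]) e3 = iP n i j u e3"
    proof
      assume h: "l = i \<and> s = j"
      show ?thesis using h caseAB(2)[of i j k e3 e1 e2 n u] assms ev1 by (simp add: insert_commute)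
    next
      assume h: "l = j \<and> s = i"
      show ?thesis using h caseAB(1)[of i j k e3 e1 e2 n u] assms ev1 by (simp add: insert_commute)
    qed
    then show ?thesis using 3 d1 by simp
  next
    case 4
    then show ?thesis by simp
  qed
qed


lemma iP_skip:
  assumes "\<And>m. m \<notin> {i,j} \<Longrightarrow> fst c \<noteq> {i,m} \<and> fst c \<noteq> {j,m}"
  shows "iP n i j (u @ [c]) e = iP n i j u e"
proof
  fix m
  show "iP n i j (u @ [c]) e m = iP n i j u e m"
  proof (cases "m \<in> {i,j}")
    case True then show ?thesis unfolding iP_def by auto
  next
    case False
    have "Ncount [c] i m d = 0" "Ncount [c] j m d = 0" for d
      unfolding Ncount1 using assms[OF False] by (cases c; auto)+
    then show ?thesis unfolding iP_def Ncount_append by simp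
  qed
qed

lemma rel_wr:
  assumes "G_rel n a b" "i \<noteq> j"
  shows "wr n i j u a = wr n i j u b \<or> (\<exists>z. wr n i j u a = [z,z] \<and> wr n i j u b = [])"
    and "\<forall>s t d. even (Ncount (u @ a) s t d + Ncount (u @ b) s t d)"
  using assms
proof (induction rule: G_rel.induct)
  case (sq c)
  show "wr n i j u [c, c] = wr n i j u [] \<or> (\<exists>z. wr n i j u [c, c] = [z,z] \<and> wr n i j u [] = [])"
  proof (cases "fst c = {i,j}")
    case True
    have "iP n i j (u @ [c]) (snd c) = iP n i j u (snd c)"
      by (rule iP_skip) (use True sq in \<open>auto simp: doubleton_eq_iff\<close>)
    then show ?thesis using True by simp
  qed simp
  show "\<forall>s t d. even (Ncount (u @ [c, c]) s t d + Ncount (u @ []) s t d)"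
    unfolding Ncount_append Ncount2 by (simp add: Ncount_def)
next
  case (comm k l s t e e')
  have "wr n i j u [({k, l}, e), ({s, t}, e')] = wr n i j u [({s, t}, e'), ({k, l}, e)]"
  proof (cases "{k,l} = {i,j}")
    case True
    then have "{i,j} \<inter> {s,t} = {}" using comm(7) by simp
    then have "i \<notin> {s,t}" "j \<notin> {s,t}" by blast+
    then have "iP n i j (u @ [({s,t},e')]) e = iP n i j u e"
      by (intro iP_skip) (auto simp: doubleton_eq_iff)
    moreover have "{s,t} \<noteq> {i,j}" using \<open>i \<notin> {s,t}\<close> by blast
    ultimately show ?thesis using True by simp
  next
    case False
    show ?thesis
    proof (cases "{s,t} = {i,j}")
      case True
      then have "{k,l} \<inter> {i,j} = {}" using comm(7) by simp
      then have "i \<notin> {k,l}" "j \<notin> {k,l}" by blast+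
      then have "iP n i j (u @ [({k,l},e)]) e' = iP n i j u e'"
        by (intro iP_skip) (auto simp: doubleton_eq_iff)
      then show ?thesis using True False by simp
    qed (use False in simp)
  qed
  then show "wr n i j u [({k, l}, e), ({s, t}, e')] = wr n i j u [({s, t}, e'), ({k, l}, e)] \<or>
    (\<exists>z. wr n i j u [({k, l}, e), ({s, t}, e')] = [z, z] \<and> wr n i j u [({s, t}, e'), ({k, l}, e)] = [])"
    by simp
  show "\<forall>s' t' d. even (Ncount (u @ [({k, l}, e), ({s, t}, e')]) s' t' d + Ncount (u @ [({s, t}, e'), ({k, l}, e)]) s' t' d)"
    unfolding Ncount_append Ncount2 by auto
next
  case (tetra k l s e1 e2 e3)
  show "wr n i j u [({k, l}, e1), ({k, s}, e2), ({l, s}, e3)] = wr n i j u [({l, s}, e3), ({k, s}, e2), ({k, l}, e1)] \<or>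
    (\<exists>z. wr n i j u [({k, l}, e1), ({k, s}, e2), ({l, s}, e3)] = [z, z] \<and> wr n i j u [({l, s}, e3), ({k, s}, e2), ({k, l}, e1)] = [])"
    by (rule disjI1, rule tetra_wr) (use tetra assms(2) in simp_all)
  show "\<forall>s' t' d. even (Ncount (u @ [({k, l}, e1), ({k, s}, e2), ({l, s}, e3)]) s' t' d + Ncount (u @ [({l, s}, e3), ({k, s}, e2), ({k, l}, e1)]) s' t' d)"
    unfolding Ncount_append Ncount_def by auto
qed

lemma step_F:
  assumes "G_step n x y" "i \<noteq> j"
  shows "F_equiv (wr n i j [] x) (wr n i j [] y)"
proof -
  obtain u v a b where h: "G_rel n a b" "x = u @ a @ v" "y = u @ b @ v"
    using assms(1) unfolding G_step_def by blast
  have ex: "wr n i j [] x = wr n i j [] u @ wr n i j u a @ wr n i j (u @ a) v"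
    "wr n i j [] y = wr n i j [] u @ wr n i j u b @ wr n i j (u @ b) v"
    using h by (simp_all add: wr_append)
  have v: "wr n i j (u @ a) v = wr n i j (u @ b) v"
    by (rule wr_par) (rule rel_wr(2)[OF h(1) assms(2)])
  from rel_wr(1)[OF h(1) assms(2), of u] show ?thesis
  proof
    assume "wr n i j u a = wr n i j u b"
    then show ?thesis unfolding ex v F_equiv_def by simp
  next
    assume "\<exists>z. wr n i j u a = [z, z] \<and> wr n i j u b = []"
    then obtain z where "wr n i j u a = [z, z]" "wr n i j u b = []" by blast
    moreover have "F_step (wr n i j [] u @ [z,z] @ wr n i j (u @ b) v) (wr n i j [] u @ wr n i j (u @ b) v)"
      by (rule F_step.intros)
    ultimately show ?thesis unfolding ex v F_equiv_def
      by (auto intro: r_into_equivclp)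
  qed
qed

theorem mainTheorem9:
  fixes n i j :: nat and \<beta> \<beta>' :: "letter list"
  assumes "n > 2" and "1 \<le> i" and "i < j" and "j \<le> n"
    and "G_equiv n \<beta> \<beta>'"
  shows "F_equiv (wP n i j \<beta>) (wP n i j \<beta>')"
proof -
  have ij: "i \<noteq> j" using assms by simp
  have "equivclp (G_step n) \<beta> \<beta>'" using assms(5) unfolding G_equiv_def .
  then have "F_equiv (wr n i j [] \<beta>) (wr n i j [] \<beta>')"
  proof (induction rule: equivclp_induct)
    case base then show ?case unfolding F_equiv_def by simp
  next
    case (step y z)
    have "F_equiv (wr n i j [] y) (wr n i j [] z) \<or> F_equiv (wr n i j [] z) (wr n i j [] y)"
      using step(2) ij step_F by blast
    then have "F_equiv (wr n i j [] y) (wr n i j [] z)"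
      unfolding F_equiv_def by (auto intro: equivclp_sym)
    then show ?case using step(3) unfolding F_equiv_def by (rule equivclp_trans[rotated])
  qed
  then show ?thesis by (simp add: wP_wr)
qed

end
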